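(* Let $N\ge1$ be an integer, $k>0$, $r>0$, $\alpha>0$ with $\alpha/r<\mu^*$. Let $\widetilde U^{\mathrm{eq}}=(x^{\mathrm{eq}},M_0^{\mathrm{eq}},M_1^{\mathrm{eq}},\dots)\in X_+$ be an equilibrium of the infinite system (S) below such that the corresponding equilibrium $U^{\mathrm{eq}}=(x^{\mathrm{eq}},u^{\mathrm{eq}},v^{\mathrm{eq}},w^{\mathrm{eq}},M_0^{\mathrm{eq}},\dots,M_N^{\mathrm{eq}})$ of the $(N+5)$-dimensional system $\dot U=F(U)$ is locally exponentially asymptotically stable. Then $\widetilde U^{\mathrm{eq}}$ is a locally asymptotically stable solution of (S) in the strong topology of $X$.
   Context: System (S): for $t\ge0$, $\dot M_0=r-kxM_0-M_0$, $\dot M_i=kxM_{i-1}-kxM_i-M_i$ ($i\ge1$), $\dot x=\alpha-kx\sum_{i=0}^\infty M_i+\sum_{i=N+1}^\infty iM_i$. $X$ is the Banach space of real sequences $(x,M_0,M_1,\dots)$ with norm $\|(x,M_0,M_1,\dots)\|=|x|+\sum_{i\ge0}(i+1)|M_i|<\infty$, and $X_+$ its nonnegative cone; solutions of (S) are the nonnegative solutions with values in $X_+$ (for which the Cauchy problem is well posed). To $(x,M_0,M_1,\dots)\in X_+$ corresponds $(x,u,v,w,M_0,\dots,M_N)\in\mathbb{R}^{N+5}$ with $u=\sum_{i\ge0}M_i$, $v=\sum_{i\ge N+1}iM_i$, $w=\sum_{i\ge N}M_i$. The map $F:\mathbb{R}^{N+5}\to\mathbb{R}^{N+5}$ (variables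 $U_1=x,U_2=u,U_3=v,U_4=w,U_{5+i}=M_i$) is $F_1=\alpha+U_3-kU_1U_2$, $F_2=r-U_2$, $F_3=-U_3+kU_1U_4+NkU_1U_{N+5}$, $F_4=-U_4+kU_1U_{N+4}$, $F_5=r-U_5-kU_1U_5$, $F_j=-U_j+kU_1U_{j-1}-kU_1U_j$ ($6\le j\le N+5$). Finally $\mu^*:=\widetilde{\mathcal F}_N(y^* )$, where $\widetilde{\mathcal F}_N(y)=\frac{y}{1-y}(1-(N+1)y^N+Ny^{N+1})$ and $y^*$ is the unique zero in $(0,1)$ of $p_N(y)=1-(N+1)^2y^N+N(2N+3)y^{N+1}-N(N+1)y^{N+2}$; (S) has equilibria in $X_+$ iff $\alpha/r\le\mu^*$. *)

theory Defs
  imports "HOL-Analysis.Analysis"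
begin

definition pN :: "nat \<Rightarrow> real \<Rightarrow> real" where
  "pN N y = 1 - (real N + 1)^2 * y^N + real N * (2 * real N + 3) * y^(N+1)
            - real N * (real N + 1) * y^(N+2)"

definition FtildeN :: "nat \<Rightarrow> real \<Rightarrow> real" where
  "FtildeN N y = y / (1 - y) * (1 - (real N + 1) * y^N + real N * y^(N+1))"

definition ystar :: "nat \<Rightarrow> real" where
  "ystar N = (THE y. 0 < y \<and> y < 1 \<and> pN N y = 0)"

definition mustar :: "nat \<Rightarrow> real" where
  "mustar N = FtildeN N (ystar N)"

definition inX :: "(nat \<Rightarrow> real) \<Rightarrow> bool" where
  "inX M \<longleftrightarrow> summable (\<lambda>i. (real i + 1) * \<bar>M i\<bar>)"

definition Xnorm :: "real \<Rightarrow> (nat \<Rightarrow> real) \<Rightarrow> real" where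
  "Xnorm x M = \<bar>x\<bar> + (\<Sum>i. (real i + 1) * \<bar>M i\<bar>)"

definition inXplus :: "real \<Rightarrow> (nat \<Rightarrow> real) \<Rightarrow> bool" where
  "inXplus x M \<longleftrightarrow> x \<ge> 0 \<and> (\<forall>i. M i \<ge> 0) \<and> inX M"

definition Xdist :: "real \<Rightarrow> (nat \<Rightarrow> real) \<Rightarrow> real \<Rightarrow> (nat \<Rightarrow> real) \<Rightarrow> real" where
  "Xdist x M y L = Xnorm (x - y) (\<lambda>i. M i - L i)"

definition S_rhs_x :: "nat \<Rightarrow> real \<Rightarrow> real \<Rightarrow> real \<Rightarrow> (nat \<Rightarrow> real) \<Rightarrow> real" where
  "S_rhs_x N k \<alpha> x M = \<alpha> - k * x * (\<Sum>i. M i) + (\<Sum>i. if N + 1 \<le> i then real i * M i else 0)"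

definition S_rhs_M :: "real \<Rightarrow> real \<Rightarrow> real \<Rightarrow> (nat \<Rightarrow> real) \<Rightarrow> nat \<Rightarrow> real" where
  "S_rhs_M k r x M i =
     (if i = 0 then r - k * x * M 0 - M 0
      else k * x * M (i - 1) - k * x * M i - M i)"

definition S_equilibrium :: "nat \<Rightarrow> real \<Rightarrow> real \<Rightarrow> real \<Rightarrow> real \<Rightarrow> (nat \<Rightarrow> real) \<Rightarrow> bool" where
  "S_equilibrium N k r \<alpha> x M \<longleftrightarrow>
     inXplus x M \<and> S_rhs_x N k \<alpha> x M = 0 \<and> (\<forall>i. S_rhs_M k r x M i = 0)"

definition S_solution :: "nat \<Rightarrow> real \<Rightarrow> real \<Rightarrow> real \<Rightarrow> (real \<Rightarrow> real) \<Rightarrow> (real \<Rightarrow> nat \<Rightarrow> real) \<Rightarrow> bool" where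
  "S_solution N k r \<alpha> xs Ms \<longleftrightarrow>
     (\<forall>t\<ge>0. inXplus (xs t) (Ms t)) \<and>
     (\<forall>t\<ge>0. ((\<lambda>s. Xdist (xs s) (Ms s) (xs t) (Ms t)) \<longlongrightarrow> 0) (at t within {0..})) \<and>
     (\<forall>t\<ge>0. (xs has_real_derivative S_rhs_x N k \<alpha> (xs t) (Ms t)) (at t within {0..})) \<and>
     (\<forall>t\<ge>0. \<forall>i. ((\<lambda>s. Ms s i) has_real_derivative S_rhs_M k r (xs t) (Ms t) i) (at t within {0..}))"

definition S_locally_asymptotically_stable ::
  "nat \<Rightarrow> real \<Rightarrow> real \<Rightarrow> real \<Rightarrow> real \<Rightarrow> (nat \<Rightarrow> real) \<Rightarrow> bool" where
  "S_locally_asymptotically_stable N k r \<alpha> xe Me \<longleftrightarrow>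
     (\<forall>\<epsilon>>0. \<exists>\<delta>>0. \<forall>xs Ms. S_solution N k r \<alpha> xs Ms \<and> Xdist (xs 0) (Ms 0) xe Me < \<delta> \<longrightarrow>
        (\<forall>t\<ge>0. Xdist (xs t) (Ms t) xe Me < \<epsilon>)) \<and>
     (\<exists>\<delta>>0. \<forall>xs Ms. S_solution N k r \<alpha> xs Ms \<and> Xdist (xs 0) (Ms 0) xe Me < \<delta> \<longrightarrow>
        ((\<lambda>t. Xdist (xs t) (Ms t) xe Me) \<longlongrightarrow> 0) at_top)"

text \<open>Vectors of R^(N+5) are represented as functions nat => real, with the relevant
  components U 1, ..., U (N+5) (indices as in the paper: U_1 = x, U_2 = u, U_3 = v,
  U_4 = w, U_(5+i) = M_i).\<close>

definition F :: "nat \<Rightarrow> real \<Rightarrow> real \<Rightarrow> real \<Rightarrow> (nat \<Rightarrow> real) \<Rightarrow> nat \<Rightarrow> real" where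
  "F N k r \<alpha> U j =
     (if j = 1 then \<alpha> + U 3 - k * U 1 * U 2
      else if j = 2 then r - U 2
      else if j = 3 then - U 3 + k * U 1 * U 4 + real N * k * U 1 * U (N + 5)
      else if j = 4 then - U 4 + k * U 1 * U (N + 4)
      else if j = 5 then r - U 5 - k * U 1 * U 5
      else if 6 \<le> j \<and> j \<le> N + 5 then - U j + k * U 1 * U (j - 1) - k * U 1 * U j
      else 0)"

definition fdist :: "nat \<Rightarrow> (nat \<Rightarrow> real) \<Rightarrow> (nat \<Rightarrow> real) \<Rightarrow> real" where
  "fdist N U V = (\<Sum>j\<in>{1..N+5}. \<bar>U j - V j\<bar>)"

definition F_solution_on :: "nat \<Rightarrow> real \<Rightarrow> real \<Rightarrow> real \<Rightarrow> real \<Rightarrow> (real \<Rightarrow> nat \<Rightarrow> real) \<Rightarrow> bool" where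
  "F_solution_on N k r \<alpha> T U \<longleftrightarrow>
     (\<forall>t\<in>{0..<T}. \<forall>j\<in>{1..N+5}.
        ((\<lambda>s. U s j) has_real_derivative F N k r \<alpha> (U t) j) (at t within {0..<T}))"

definition F_locally_exp_stable :: "nat \<Rightarrow> real \<Rightarrow> real \<Rightarrow> real \<Rightarrow> (nat \<Rightarrow> real) \<Rightarrow> bool" where
  "F_locally_exp_stable N k r \<alpha> Ue \<longleftrightarrow>
     (\<exists>\<delta>>0. \<exists>C lam. lam > 0 \<and>
        (\<forall>T>0. \<forall>U. F_solution_on N k r \<alpha> T U \<and> fdist N (U 0) Ue < \<delta> \<longrightarrow>
           (\<forall>t\<in>{0..<T}. fdist N (U t) Ue \<le> C * exp (- lam * t) * fdist N (U 0) Ue)))"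

definition reduce :: "nat \<Rightarrow> real \<Rightarrow> (nat \<Rightarrow> real) \<Rightarrow> nat \<Rightarrow> real" where
  "reduce N x M j =
     (if j = 1 then x
      else if j = 2 then (\<Sum>i. M i)
      else if j = 3 then (\<Sum>i. if N + 1 \<le> i then real i * M i else 0)
      else if j = 4 then (\<Sum>i. if N \<le> i then M i else 0)
      else if 5 \<le> j \<and> j \<le> N + 5 then M (j - 5)
      else 0)"

end

theory Submission
  imports Defs
begin


lemma nonpos_stays:
  fixes w w' :: "real \<Rightarrow> real"
  assumes der: "\<And>s. s \<ge> 0 \<Longrightarrow> (w has_real_derivative w' s) (at s within {0..})"
    and w0: "w 0 \<le> 0"
    and neg: "\<And>s. s \<ge> 0 \<Longrightarrow> w s > 0 \<Longrightarrow> w' s \<le> 0"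
    and t: "t \<ge> 0"
  shows "w t \<le> 0"
proof (rule ccontr)
  assume "\<not> w t \<le> 0"
  hence wt: "w t > 0" by simp
  have cont: "continuous_on {0..} w"
    by (rule DERIV_continuous_on[OF der]) auto
  define Z where "Z = {0..t} \<inter> w -` {..0}"
  have contZ: "continuous_on {0..t} w" using cont by (rule continuous_on_subset) auto
  have cl: "closed Z" unfolding Z_def by (rule continuous_closed_preimage[OF contZ]) auto
  have ne: "0 \<in> Z" using w0 t unfolding Z_def by auto
  have bdd: "bdd_above Z" unfolding Z_def by (rule bdd_aboveI[of _ t]) auto
  define s0 where "s0 = Sup Z"
  have s0Z: "s0 \<in> Z" unfolding s0_def using closed_contains_Sup[OF _ bdd cl] ne by auto
  hence s0: "0 \<le> s0" "s0 \<le> t" "w s0 \<le> 0" unfolding Z_def by auto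
  have lt: "s0 < t" using s0 wt by (cases "s0 = t") auto
  have pos: "w z > 0" if "s0 < z" "z \<le> t" for z
  proof (rule ccontr)
    assume "\<not> w z > 0"
    hence "z \<in> Z" using that s0 unfolding Z_def by auto
    hence "z \<le> s0" unfolding s0_def using bdd by (rule cSup_upper)
    thus False using that by simp
  qed
  have c2: "continuous_on {s0..t} w" using cont by (rule continuous_on_subset) (use s0 in auto)
  have d2: "w differentiable (at z)" if "s0 < z" "z < t" for z
  proof -
    have "z \<in> interior {0::real..}" using that s0 by auto
    hence "at z within {0..} = at z" by (rule at_within_interior)
    thus ?thesis using der[of z] that s0 unfolding real_differentiable_def by auto
  qed
  obtain l z where z: "s0 < z" "z < t" "DERIV w z :> l" "w t - w s0 = (t - s0) * l"
    using MVT[OF lt c2 d2] by blast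
  have "z \<in> interior {0::real..}" using z s0 by auto
  hence "at z within {0..} = at z" by (rule at_within_interior)
  hence "DERIV w z :> w' z" using der[of z] z s0 by auto
  hence "l = w' z" using z(3) DERIV_unique by blast
  moreover have "w' z \<le> 0" using neg[of z] pos[of z] z s0 by auto
  ultimately have "(t - s0) * l \<le> 0" using lt by (simp add: mult_nonneg_nonpos)
  hence "w t \<le> w s0" using z(4) by linarith
  thus False using s0 wt by simp
qed

lemma ode_exp_bound:
  fixes y a g :: "real \<Rightarrow> real"
  assumes der: "\<And>s. s \<ge> 0 \<Longrightarrow> (y has_real_derivative (- a s * y s + g s)) (at s within {0..})"
    and a1: "\<And>s. s \<ge> 0 \<Longrightarrow> a s \<ge> 1"
    and gb: "\<And>s. s \<ge> 0 \<Longrightarrow> \<bar>g s\<bar> \<le> A * exp (- \<mu> * s)"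
    and mu: "0 < \<mu>" "\<mu> < 1"
    and t: "t \<ge> 0"
  shows "\<bar>y t\<bar> \<le> (\<bar>y 0\<bar> + A / (1 - \<mu>)) * exp (- \<mu> * t)"
proof -
  define B where "B = \<bar>y 0\<bar> + A / (1 - \<mu>)"
  have A0: "A \<ge> 0" using gb[of 0] by simp
  have "(1 - \<mu>) * B = (1 - \<mu>) * \<bar>y 0\<bar> + A" unfolding B_def using mu
    by (simp add: field_simps)
  moreover have "(1 - \<mu>) * \<bar>y 0\<bar> \<ge> 0" using mu by simp
  ultimately have BA: "(1 - \<mu>) * B \<ge> A" by linarith
  have edr: "((\<lambda>s. B * exp (- \<mu> * s)) has_real_derivative (- \<mu> * (B * exp (- \<mu> * s)))) (at s within {0..})" for s
    by (auto intro!: derivative_eq_intros)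
  have key: "\<sigma> * y t - B * exp (- \<mu> * t) \<le> 0" if sg: "\<sigma> = 1 \<or> \<sigma> = -1" for \<sigma> :: real
  proof (rule nonpos_stays[where w = "\<lambda>s. \<sigma> * y s - B * exp (- \<mu> * s)"
        and w' = "\<lambda>s. \<sigma> * (- a s * y s + g s) - (- \<mu> * (B * exp (- \<mu> * s)))"])
    fix s :: real assume s: "s \<ge> 0"
    show "((\<lambda>s. \<sigma> * y s - B * exp (- \<mu> * s)) has_real_derivative
        \<sigma> * (- a s * y s + g s) - (- \<mu> * (B * exp (- \<mu> * s)))) (at s within {0..})"
      by (intro DERIV_diff DERIV_cmult der[OF s] edr)
  next
    have h: "A / (1 - \<mu>) \<ge> 0" using A0 mu by simp
    have "\<sigma> * y 0 \<le> \<bar>y 0\<bar>" using sg by (elim disjE) simp_all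
    thus "\<sigma> * y 0 - B * exp (- \<mu> * 0) \<le> 0" unfolding B_def using h by (simp only: mult_zero_right exp_zero mult_1_right)
  next
    fix s :: real assume s: "s \<ge> 0" and p: "\<sigma> * y s - B * exp (- \<mu> * s) > 0"
    define e where "e = exp (- \<mu> * s)"
    have e0: "e > 0" unfolding e_def by simp
    have sy: "\<sigma> * y s > B * e" using p unfolding e_def by simp
    have B0: "B \<ge> 0" unfolding B_def using A0 mu by auto
    have sy0: "\<sigma> * y s \<ge> 0" using sy mult_nonneg_nonneg[OF B0 less_imp_le[OF e0]] by linarith
    have "\<sigma> * (- a s * y s) = - a s * (\<sigma> * y s)" by simp
    also have "\<dots> \<le> - (1 * (\<sigma> * y s))" using mult_right_mono[OF a1[OF s] sy0] by linarith
    finally have t1: "\<sigma> * (- a s * y s) \<le> - (\<sigma> * y s)" by simp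
    have t2: "\<sigma> * g s \<le> A * e" using gb[OF s] sg unfolding e_def by auto
    have "\<sigma> * (- a s * y s + g s) - (- \<mu> * (B * e)) \<le> - (B * e) + A * e + \<mu> * B * e"
      using t1 t2 sy by (simp add: algebra_simps)
    also have "\<dots> = e * (A - (1 - \<mu>) * B)" by (simp add: algebra_simps)
    also have "\<dots> \<le> 0" using e0 BA by (simp add: mult_nonneg_nonpos)
    finally show "\<sigma> * (- a s * y s + g s) - (- \<mu> * (B * exp (- \<mu> * s))) \<le> 0" unfolding e_def .
  next
    show "t \<ge> 0" by (rule t)
  qed
  have "1 * y t - B * exp (- \<mu> * t) \<le> 0" "(-1) * y t - B * exp (- \<mu> * t) \<le> 0"
    using key[of 1] key[of "-1"] by simp_all
  hence "\<bar>y t\<bar> \<le> B * exp (- \<mu> * t)" by (simp add: abs_le_iff)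
  thus ?thesis unfolding B_def .
qed



definition wt :: "(nat \<Rightarrow> real) \<Rightarrow> nat \<Rightarrow> real" where
  "wt M i = (real i + 1) * \<bar>M i\<bar>"

lemma wt_nonneg: "wt M i \<ge> 0" unfolding wt_def by simp

lemma inX_weight:
  assumes "inX M" and c: "\<And>i. \<bar>c i\<bar> \<le> real i + 1"
  shows "summable (\<lambda>i. c i * M i)"
proof (rule summable_comparison_test'[where N=0])
  show "summable (\<lambda>i. (real i + 1) * \<bar>M i\<bar>)" using assms unfolding inX_def by simp
  fix n :: nat
  show "norm (c n * M n) \<le> (real n + 1) * \<bar>M n\<bar>"
    using c[of n] by (simp add: abs_mult mult_right_mono)
qed

lemma inX_summable: "inX M \<Longrightarrow> summable M"
  using inX_weight[of M "\<lambda>_. 1"] by simp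

lemma inX_diff:
  assumes "inX M" "inX L"
  shows "summable (\<lambda>i. (real i + 1) * \<bar>M i - L i\<bar>)"
proof (rule summable_comparison_test'[where N=0])
  show "summable (\<lambda>i. (real i + 1) * \<bar>M i\<bar> + (real i + 1) * \<bar>L i\<bar>)"
    using assms unfolding inX_def by (intro summable_add)
  fix n :: nat
  have "\<bar>M n - L n\<bar> \<le> \<bar>M n\<bar> + \<bar>L n\<bar>" by simp
  hence "(real n + 1) * \<bar>M n - L n\<bar> \<le> (real n + 1) * (\<bar>M n\<bar> + \<bar>L n\<bar>)"
    by (intro mult_left_mono) auto
  thus "norm ((real n + 1) * \<bar>M n - L n\<bar>) \<le> (real n + 1) * \<bar>M n\<bar> + (real n + 1) * \<bar>L n\<bar>"
    by (simp add: algebra_simps)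
qed

lemma Xdist_ge_sum: "(\<Sum>i. (real i + 1) * \<bar>M i - L i\<bar>) \<le> Xdist x M y L"
  unfolding Xdist_def Xnorm_def by simp

lemma Xdist_self: "Xdist x M x M = 0"
  unfolding Xdist_def Xnorm_def by simp

lemma wsum_tri:
  assumes "inX M" "inX L"
  shows "(\<Sum>i\<in>{m..<n}. wt M i) \<le> (\<Sum>i\<in>{m..<n}. wt L i) + (\<Sum>i. (real i + 1) * \<bar>M i - L i\<bar>)"
proof -
  have "(\<Sum>i\<in>{m..<n}. wt M i) \<le> (\<Sum>i\<in>{m..<n}. wt L i + (real i + 1) * \<bar>M i - L i\<bar>)"
  proof (rule sum_mono)
    fix i
    have "\<bar>M i\<bar> \<le> \<bar>L i\<bar> + \<bar>M i - L i\<bar>" by simp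
    hence "(real i + 1) * \<bar>M i\<bar> \<le> (real i + 1) * (\<bar>L i\<bar> + \<bar>M i - L i\<bar>)"
      by (intro mult_left_mono) auto
    thus "wt M i \<le> wt L i + (real i + 1) * \<bar>M i - L i\<bar>" unfolding wt_def by (simp add: algebra_simps)
  qed
  also have "\<dots> = (\<Sum>i\<in>{m..<n}. wt L i) + (\<Sum>i\<in>{m..<n}. (real i + 1) * \<bar>M i - L i\<bar>)"
    by (simp add: sum.distrib)
  also have "(\<Sum>i\<in>{m..<n}. (real i + 1) * \<bar>M i - L i\<bar>) \<le> (\<Sum>i. (real i + 1) * \<bar>M i - L i\<bar>)"
    by (rule sum_le_suminf[OF inX_diff[OF assms]]) auto
  finally show ?thesis by simp
qed

lemma sol_inXplus: "S_solution N k r \<alpha> xs Ms \<Longrightarrow> t \<ge> 0 \<Longrightarrow> inXplus (xs t) (Ms t)"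
  unfolding S_solution_def by auto

lemma sol_inX: "S_solution N k r \<alpha> xs Ms \<Longrightarrow> t \<ge> 0 \<Longrightarrow> inX (Ms t)"
  unfolding S_solution_def inXplus_def by auto

lemma unif_tail:
  assumes sol: "S_solution N k r \<alpha> xs Ms" and K: "compact K" "K \<subseteq> {0..}" and e: "\<epsilon> > 0"
  shows "\<exists>m0. \<forall>s\<in>K. \<forall>m\<ge>m0. \<forall>n. (\<Sum>i\<in>{m..<n}. wt (Ms s) i) < \<epsilon>"
proof -
  have loc: "\<exists>dm. fst dm > 0 \<and> (\<forall>s\<in>K. dist s t < fst dm \<longrightarrow> Xdist (xs s) (Ms s) (xs t) (Ms t) < \<epsilon>/2)
      \<and> (\<forall>m\<ge>snd dm. \<forall>n. (\<Sum>i\<in>{m..<n}. wt (Ms t) i) < \<epsilon>/2)" if t: "t \<in> K" for t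
  proof -
    have t0: "t \<ge> 0" using t K by auto
    have "((\<lambda>s. Xdist (xs s) (Ms s) (xs t) (Ms t)) \<longlongrightarrow> 0) (at t within {0..})"
      using sol t0 unfolding S_solution_def by auto
    hence "eventually (\<lambda>s. Xdist (xs s) (Ms s) (xs t) (Ms t) < \<epsilon>/2) (at t within {0..})"
      using e by (intro order_tendstoD) auto
    then obtain d where d: "d > 0" "\<And>s. s \<in> {0..} \<Longrightarrow> s \<noteq> t \<Longrightarrow> dist s t < d \<Longrightarrow> Xdist (xs s) (Ms s) (xs t) (Ms t) < \<epsilon>/2"
      unfolding eventually_at by blast
    have d2: "\<forall>s\<in>K. dist s t < d \<longrightarrow> Xdist (xs s) (Ms s) (xs t) (Ms t) < \<epsilon>/2"
    proof safe
      fix s assume "s \<in> K" "dist s t < d"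
      thus "Xdist (xs s) (Ms s) (xs t) (Ms t) < \<epsilon>/2"
        using d K e Xdist_self by (cases "s = t") auto
    qed
    have "summable (wt (Ms t))" using sol_inX[OF sol t0] unfolding inX_def wt_def by simp
    then obtain m0 where m0: "\<forall>m\<ge>m0. \<forall>n. norm (sum (wt (Ms t)) {m..<n}) < \<epsilon>/2"
      unfolding summable_Cauchy using e by (meson half_gt_zero)
    have "\<forall>m\<ge>m0. \<forall>n. (\<Sum>i\<in>{m..<n}. wt (Ms t) i) < \<epsilon>/2"
    proof safe
      fix m n assume "m0 \<le> m"
      hence "norm (sum (wt (Ms t)) {m..<n}) < \<epsilon>/2" using m0 by auto
      moreover have "sum (wt (Ms t)) {m..<n} \<ge> 0" by (intro sum_nonneg wt_nonneg)
      ultimately show "(\<Sum>i\<in>{m..<n}. wt (Ms t) i) < \<epsilon>/2" by simp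
    qed
    thus ?thesis using d d2 by (intro exI[of _ "(d, m0)"]) auto
  qed
  then obtain DM where DM: "\<And>t. t \<in> K \<Longrightarrow> fst (DM t) > 0 \<and> (\<forall>s\<in>K. dist s t < fst (DM t) \<longrightarrow> Xdist (xs s) (Ms s) (xs t) (Ms t) < \<epsilon>/2)
      \<and> (\<forall>m\<ge>snd (DM t). \<forall>n. (\<Sum>i\<in>{m..<n}. wt (Ms t) i) < \<epsilon>/2)"
    by metis
  have cov: "K \<subseteq> (\<Union>t\<in>K. ball t (fst (DM t)))"
    using DM by force
  obtain K' where K': "K' \<subseteq> K" "finite K'" "K \<subseteq> (\<Union>t\<in>K'. ball t (fst (DM t)))"
    using compactE_image[OF K(1) _ cov] by blast
  define m0 where "m0 = Max (insert 0 (snd ` DM ` K'))"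
  have "\<forall>s\<in>K. \<forall>m\<ge>m0. \<forall>n. (\<Sum>i\<in>{m..<n}. wt (Ms s) i) < \<epsilon>"
  proof (intro ballI allI impI)
    fix s m n assume s: "s \<in> K" and m: "m0 \<le> m"
    obtain t where t: "t \<in> K'" "s \<in> ball t (fst (DM t))" using K' s by blast
    have tK: "t \<in> K" using t K' by auto
    have s0: "s \<ge> 0" "t \<ge> 0" using s tK K by auto
    have "snd (DM t) \<le> m0" unfolding m0_def using t K' by (intro Max_ge) auto
    hence a: "(\<Sum>i\<in>{m..<n}. wt (Ms t) i) < \<epsilon>/2" using DM[OF tK] m by auto
    have "dist s t < fst (DM t)" using t by (simp add: dist_commute)
    hence b: "Xdist (xs s) (Ms s) (xs t) (Ms t) < \<epsilon>/2" using DM[OF tK] s by auto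
    have "(\<Sum>i\<in>{m..<n}. wt (Ms s) i) \<le> (\<Sum>i\<in>{m..<n}. wt (Ms t) i) + (\<Sum>i. (real i + 1) * \<bar>Ms s i - Ms t i\<bar>)"
      by (rule wsum_tri[OF sol_inX[OF sol s0(1)] sol_inX[OF sol s0(2)]])
    also have "\<dots> \<le> (\<Sum>i\<in>{m..<n}. wt (Ms t) i) + Xdist (xs s) (Ms s) (xs t) (Ms t)"
      using Xdist_ge_sum by simp
    finally show "(\<Sum>i\<in>{m..<n}. wt (Ms s) i) < \<epsilon>" using a b by simp
  qed
  thus ?thesis by blast
qed



lemma rhs_bound:
  assumes "\<bar>c i\<bar> \<le> real i + 1" "\<bar>x\<bar> \<le> X" "i \<ge> 1" "k > 0"
  shows "\<bar>c i * S_rhs_M k r x M i\<bar> \<le> 2 * k * X * wt M (i - 1) + (k * X + 1) * wt M i"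
proof -
  have X0: "X \<ge> 0" using assms(2) by simp
  have r: "S_rhs_M k r x M i = k * x * M (i - 1) - k * x * M i - M i"
    unfolding S_rhs_M_def using assms(3) by simp
  have "\<bar>k * x * M (i - 1) - k * x * M i - M i\<bar> \<le> k * X * \<bar>M (i - 1)\<bar> + (k * X + 1) * \<bar>M i\<bar>"
  proof -
    have "\<bar>k * x * M (i - 1)\<bar> \<le> k * X * \<bar>M (i - 1)\<bar>" using assms
      by (simp add: abs_mult mult_right_mono)
    moreover have "\<bar>k * x * M i\<bar> \<le> k * X * \<bar>M i\<bar>" using assms
      by (simp add: abs_mult mult_right_mono)
    ultimately show ?thesis by (simp add: algebra_simps) linarith
  qed
  hence "\<bar>c i * S_rhs_M k r x M i\<bar> \<le> (real i + 1) * (k * X * \<bar>M (i - 1)\<bar> + (k * X + 1) * \<bar>M i\<bar>)"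
    unfolding r abs_mult using assms(1) by (intro mult_mono) auto
  also have "\<dots> = k * X * ((real i + 1) * \<bar>M (i - 1)\<bar>) + (k * X + 1) * wt M i"
    unfolding wt_def by (simp add: algebra_simps)
  also have "(real i + 1) * \<bar>M (i - 1)\<bar> \<le> 2 * wt M (i - 1)"
  proof -
    have h: "real i + 1 \<le> 2 * (real (i - 1) + 1)" using assms(3) by (simp add: of_nat_diff)
    have "(real i + 1) * \<bar>M (i - 1)\<bar> \<le> 2 * (real (i - 1) + 1) * \<bar>M (i - 1)\<bar>"
      by (rule mult_right_mono[OF h]) simp
    thus ?thesis unfolding wt_def by (simp only: mult.assoc)
  qed
  hence "k * X * ((real i + 1) * \<bar>M (i - 1)\<bar>) \<le> k * X * (2 * wt M (i - 1))"
    using assms X0 by (intro mult_left_mono) auto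
  finally show ?thesis by (simp add: algebra_simps)
qed

lemma rhs_sum_bound:
  assumes c: "\<And>i. \<bar>c i\<bar> \<le> real i + 1" and x: "\<bar>x\<bar> \<le> X" and m: "m \<ge> 1" and k: "k > 0"
  shows "(\<Sum>i\<in>{m..<n}. \<bar>c i * S_rhs_M k r x M i\<bar>) \<le> (3 * k * X + 1) * (\<Sum>i\<in>{m-1..<n}. wt M i)"
proof -
  have X0: "X \<ge> 0" using x by simp
  have "(\<Sum>i\<in>{m..<n}. \<bar>c i * S_rhs_M k r x M i\<bar>)
      \<le> (\<Sum>i\<in>{m..<n}. 2 * k * X * wt M (i - 1) + (k * X + 1) * wt M i)"
    using m by (intro sum_mono rhs_bound[OF c x _ k]) auto
  also have "\<dots> = 2 * k * X * (\<Sum>i\<in>{m..<n}. wt M (i - 1)) + (k * X + 1) * (\<Sum>i\<in>{m..<n}. wt M i)"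
    by (simp add: sum.distrib sum_distrib_left)
  also have "(\<Sum>i\<in>{m..<n}. wt M (i - 1)) \<le> (\<Sum>i\<in>{m-1..<n}. wt M i)"
  proof -
    have inj: "inj_on (\<lambda>i. i - 1) {m..<n}" using m by (auto simp: inj_on_def)
    have "(\<Sum>i\<in>(\<lambda>i. i - 1) ` {m..<n}. wt M i) = (\<Sum>i\<in>{m..<n}. wt M (i - 1))"
      by (subst sum.reindex[OF inj]) (simp add: o_def)
    hence "(\<Sum>i\<in>{m..<n}. wt M (i - 1)) = (\<Sum>i\<in>(\<lambda>i. i - 1) ` {m..<n}. wt M i)" by simp
    also have "\<dots> \<le> (\<Sum>i\<in>{m-1..<n}. wt M i)"
      by (intro sum_mono2) (auto simp: wt_nonneg)
    finally show ?thesis .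
  qed
  hence "2 * k * X * (\<Sum>i\<in>{m..<n}. wt M (i - 1)) \<le> 2 * k * X * (\<Sum>i\<in>{m-1..<n}. wt M i)"
    using k X0 by (intro mult_left_mono) auto
  also have "(\<Sum>i\<in>{m..<n}. wt M i) \<le> (\<Sum>i\<in>{m-1..<n}. wt M i)"
    by (intro sum_mono2) (auto simp: wt_nonneg)
  hence "(k * X + 1) * (\<Sum>i\<in>{m..<n}. wt M i) \<le> (k * X + 1) * (\<Sum>i\<in>{m-1..<n}. wt M i)"
    using k X0 by (intro mult_left_mono) auto
  finally show ?thesis by (simp add: algebra_simps)
qed

lemma series_deriv:
  assumes sol: "S_solution N k r \<alpha> xs Ms" and t: "t \<ge> 0" and k: "k > 0"
    and c: "\<And>i. \<bar>c i\<bar> \<le> real i + 1"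
  shows "((\<lambda>s. \<Sum>i. c i * Ms s i) has_real_derivative (\<Sum>i. c i * S_rhs_M k r (xs t) (Ms t) i)) (at t within {0..})"
proof -
  define K where "K = {max 0 (t - 1)..t + 1}"
  have Kc: "compact K" "convex K" "K \<subseteq> {0..}" "t \<in> K" unfolding K_def using t by auto
  have derM: "\<And>s i. s \<ge> 0 \<Longrightarrow> ((\<lambda>s. Ms s i) has_real_derivative S_rhs_M k r (xs s) (Ms s) i) (at s within {0..})"
    using sol unfolding S_solution_def by auto
  have derx: "\<And>s. s \<ge> 0 \<Longrightarrow> (xs has_real_derivative S_rhs_x N k \<alpha> (xs s) (Ms s)) (at s within {0..})"
    using sol unfolding S_solution_def by auto
  have "continuous_on {0..} xs" by (rule DERIV_continuous_on[OF derx]) auto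
  hence "continuous_on K xs" using continuous_on_subset Kc(3) by blast
  hence "bounded (xs ` K)" using Kc by (intro compact_imp_bounded compact_continuous_image)
  then obtain X0 where X0: "\<And>s. s \<in> K \<Longrightarrow> \<bar>xs s\<bar> \<le> X0" unfolding bounded_iff by auto
  define X where "X = max X0 0"
  have X: "\<And>s. s \<in> K \<Longrightarrow> \<bar>xs s\<bar> \<le> X" "X \<ge> 0" unfolding X_def using X0 by force+
  define f' where "f' = (\<lambda>i s. c i * S_rhs_M k r (xs s) (Ms s) i)"
  define L where "L = 3 * k * X + 1"
  have L: "L > 0" unfolding L_def using mult_nonneg_nonneg[of "3*k" X] k X(2) by linarith
  have uc: "uniformly_Cauchy_on K (\<lambda>n s. \<Sum>i<n. f' i s)"
    unfolding uniformly_Cauchy_on_def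
  proof (intro allI impI)
    fix e :: real assume e: "e > 0"
    obtain m0 where m0: "\<forall>s\<in>K. \<forall>m\<ge>m0. \<forall>n. (\<Sum>i\<in>{m..<n}. wt (Ms s) i) < e / L"
      using unif_tail[OF sol Kc(1) Kc(3), of "e / L"] e L by auto
    have main: "dist (\<Sum>i<m. f' i s) (\<Sum>i<n. f' i s) < e" if s: "s \<in> K" and mn: "m0 + 1 \<le> m" "m \<le> n" for s m n
    proof -
      have "dist (\<Sum>i<m. f' i s) (\<Sum>i<n. f' i s) = \<bar>\<Sum>i\<in>{m..<n}. f' i s\<bar>"
        using sum_diff_nat_ivl[of 0 m n "\<lambda>i. f' i s"] mn
        by (simp add: dist_real_def atLeast0LessThan abs_minus_commute)
      also have "\<dots> \<le> (\<Sum>i\<in>{m..<n}. \<bar>f' i s\<bar>)" by (rule sum_abs)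
      also have "\<dots> \<le> L * (\<Sum>i\<in>{m-1..<n}. wt (Ms s) i)"
        unfolding f'_def L_def using mn by (intro rhs_sum_bound[OF c X(1)[OF s] _ k]) auto
      also have "\<dots> < L * (e / L)" using m0 s mn L by (intro mult_strict_left_mono) auto
      also have "\<dots> = e" using L by simp
      finally show ?thesis .
    qed
    show "\<exists>M. \<forall>s\<in>K. \<forall>m\<ge>M. \<forall>n\<ge>M. dist (\<Sum>i<m. f' i s) (\<Sum>i<n. f' i s) < e"
    proof (intro exI[of _ "m0 + 1"] ballI allI impI)
      fix s m n assume s: "s \<in> K" and mn: "m0 + 1 \<le> m" "m0 + 1 \<le> n"
      show "dist (\<Sum>i<m. f' i s) (\<Sum>i<n. f' i s) < e"
      proof (cases "m \<le> n")
        case True thus ?thesis using main[OF s mn(1)] by simp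
      next
        case False thus ?thesis using main[OF s mn(2), of m] by (simp add: dist_commute)
      qed
    qed
  qed
  then obtain g' where g': "uniform_limit K (\<lambda>n s. \<Sum>i<n. f' i s) g' sequentially"
    using Cauchy_uniformly_convergent unfolding uniformly_convergent_on_def by blast
  have dK: "((\<lambda>s. c n * Ms s n) has_field_derivative f' n s) (at s within K)" if "s \<in> K" for n s
    unfolding f'_def using that Kc by (intro DERIV_cmult DERIV_subset[OF derM]) auto
  have sumt: "summable (\<lambda>n. c n * Ms t n)" by (rule inX_weight[OF sol_inX[OF sol t] c])
  obtain g where g: "\<And>s. s \<in> K \<Longrightarrow> (\<lambda>n. c n * Ms s n) sums g s \<and> (g has_field_derivative g' s) (at s within K)"
    using has_field_derivative_series[OF Kc(2) dK g' Kc(4) sumt] by blast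
  have "(\<lambda>n. \<Sum>i<n. f' i t) \<longlonglongrightarrow> g' t" by (rule tendsto_uniform_limitI[OF g' Kc(4)])


  have g't: "g' t = (\<Sum>i. f' i t)"
    using \<open>(\<lambda>n. \<Sum>i<n. f' i t) \<longlonglongrightarrow> g' t\<close> unfolding sums_def[symmetric] by (rule sums_unique)
  have "((\<lambda>s. \<Sum>i. c i * Ms s i) has_real_derivative g' t) (at t within K)"
  proof (rule has_field_derivative_transform_within[OF conjunct2[OF g[OF Kc(4)]] zero_less_one Kc(4)])
    fix s assume "s \<in> K"
    thus "g s = (\<Sum>i. c i * Ms s i)" using g by (simp add: sums_unique)
  qed
  moreover have "at t within {0..} = at t within K"
    by (rule at_within_nhd[of t "ball t 1"]) (auto simp: K_def dist_real_def)
  ultimately show ?thesis using g't unfolding f'_def by simp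
qed



lemma inX_v: "inX M \<Longrightarrow> summable (\<lambda>i. if N + 1 \<le> i then real i * M i else 0)"
proof -
  assume M: "inX M"
  have "summable (\<lambda>i. (if N + 1 \<le> i then real i else 0) * M i)" by (rule inX_weight[OF M]) auto
  moreover have "(\<lambda>i. (if N + 1 \<le> i then real i else 0) * M i) = (\<lambda>i. if N + 1 \<le> i then real i * M i else 0)"
    by auto
  ultimately show ?thesis by simp
qed

lemma inX_w: "inX M \<Longrightarrow> summable (\<lambda>i. if N \<le> i then M i else 0)"
proof -
  assume M: "inX M"
  have "summable (\<lambda>i. (if N \<le> i then 1 else 0) * M i)" by (rule inX_weight[OF M]) auto
  moreover have "(\<lambda>i. (if N \<le> i then 1 else 0) * M i) = (\<lambda>i. if N \<le> i then M i else 0)"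
    by auto
  ultimately show ?thesis by simp
qed

lemma sum_rhs_1:
  assumes M: "inX M"
  shows "(\<Sum>i. 1 * S_rhs_M k r x M i) = r - (\<Sum>i. M i)"
proof -
  define a where "a = (\<lambda>i. if i = 0 then r else k * x * M (i - 1))"
  have sM: "M sums (\<Sum>i. M i)" using inX_summable[OF M] by (simp add: summable_sums)
  have "(\<lambda>n. a (Suc n)) sums (k * x * (\<Sum>i. M i))" unfolding a_def using sums_mult[OF sM] by simp
  hence "a sums (k * x * (\<Sum>i. M i) + a 0)" by (simp only: sums_Suc_iff)
  hence "a sums (k * x * (\<Sum>i. M i) + r)" unfolding a_def by simp
  hence "(\<lambda>i. a i - (k * x + 1) * M i) sums (k * x * (\<Sum>i. M i) + r - (k * x + 1) * (\<Sum>i. M i))"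
    by (intro sums_diff sums_mult sM)
  moreover have "(\<lambda>i. a i - (k * x + 1) * M i) = (\<lambda>i. 1 * S_rhs_M k r x M i)"
    unfolding a_def S_rhs_M_def by (auto simp: algebra_simps)
  ultimately have "(\<lambda>i. 1 * S_rhs_M k r x M i) sums (r - (\<Sum>i. M i))"
    by (simp add: algebra_simps)
  thus ?thesis by (rule sums_unique[symmetric])
qed

lemma sum_rhs_v:
  assumes M: "inX M" and N: "N \<ge> 1"
  shows "(\<Sum>i. (if N + 1 \<le> i then real i else 0) * S_rhs_M k r x M i)
     = - (\<Sum>i. if N + 1 \<le> i then real i * M i else 0) + k * x * (\<Sum>i. if N \<le> i then M i else 0)
       + real N * k * x * M N"
proof -
  define v where "v = (\<Sum>i. if N + 1 \<le> i then real i * M i else 0)"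
  define w where "w = (\<Sum>i. if N \<le> i then M i else 0)"
  have sv: "(\<lambda>i. if N + 1 \<le> i then real i * M i else 0) sums v"
    unfolding v_def using inX_v[OF M] by (rule summable_sums)
  have sw: "(\<lambda>i. if N \<le> i then M i else 0) sums w"
    unfolding w_def using inX_w[OF M] by (rule summable_sums)
  define b where "b = (\<lambda>i. if N + 1 \<le> i then real i * (k * x) * M (i - 1) else 0)"
  have "(\<lambda>n. (if N + 1 \<le> n then real n * M n else 0) + (if n = N then real N * M N else 0)
      + (if N \<le> n then M n else 0)) sums (v + real N * M N + w)"
    by (intro sums_add sv sw sums_single)
  hence "(\<lambda>n. k * x * ((if N + 1 \<le> n then real n * M n else 0) + (if n = N then real N * M N else 0)
      + (if N \<le> n then M n else 0))) sums (k * x * (v + real N * M N + w))"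
    by (rule sums_mult)
  moreover have "(\<lambda>n. k * x * ((if N + 1 \<le> n then real n * M n else 0) + (if n = N then real N * M N else 0)
      + (if N \<le> n then M n else 0))) = (\<lambda>n. b (Suc n))"
  proof (intro ext)
    fix n
    show "k * x * ((if N + 1 \<le> n then real n * M n else 0) + (if n = N then real N * M N else 0)
      + (if N \<le> n then M n else 0)) = b (Suc n)"
      unfolding b_def by (cases "n < N"; cases "n = N") (auto simp: algebra_simps of_nat_Suc)
  qed
  ultimately have "(\<lambda>n. b (Suc n)) sums (k * x * (v + real N * M N + w))" by simp
  hence "b sums (k * x * (v + real N * M N + w) + b 0)" by (simp only: sums_Suc_iff)
  moreover have "b 0 = 0" unfolding b_def by simp
  ultimately have sb: "b sums (k * x * (v + real N * M N + w))" by simp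
  have "(\<lambda>i. b i - (k * x + 1) * (if N + 1 \<le> i then real i * M i else 0)) sums
      (k * x * (v + real N * M N + w) - (k * x + 1) * v)"
    by (intro sums_diff sums_mult sb sv)
  moreover have "(\<lambda>i. b i - (k * x + 1) * (if N + 1 \<le> i then real i * M i else 0))
      = (\<lambda>i. (if N + 1 \<le> i then real i else 0) * S_rhs_M k r x M i)"
    unfolding b_def S_rhs_M_def by (auto simp: algebra_simps)
  ultimately have "(\<lambda>i. (if N + 1 \<le> i then real i else 0) * S_rhs_M k r x M i) sums
      (- v + k * x * w + real N * k * x * M N)" by (simp add: algebra_simps)
  thus ?thesis unfolding v_def w_def by (rule sums_unique[symmetric])
qed

lemma sum_rhs_w:
  assumes M: "inX M" and N: "N \<ge> 1"
  shows "(\<Sum>i. (if N \<le> i then 1 else 0) * S_rhs_M k r x M i)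
     = - (\<Sum>i. if N \<le> i then M i else 0) + k * x * M (N - 1)"
proof -
  define w where "w = (\<Sum>i. if N \<le> i then M i else 0)"
  have sw: "(\<lambda>i. if N \<le> i then M i else 0) sums w"
    unfolding w_def using inX_w[OF M] by (rule summable_sums)
  define b where "b = (\<lambda>i. if N \<le> i then k * x * M (i - 1) else 0)"
  have "(\<lambda>n. (if N \<le> n then M n else 0) + (if n = N - 1 then M (N - 1) else 0)) sums (w + M (N - 1))"
    by (intro sums_add sw sums_single)
  hence "(\<lambda>n. k * x * ((if N \<le> n then M n else 0) + (if n = N - 1 then M (N - 1) else 0))) sums (k * x * (w + M (N - 1)))"
    by (rule sums_mult)
  moreover have "(\<lambda>n. k * x * ((if N \<le> n then M n else 0) + (if n = N - 1 then M (N - 1) else 0))) = (\<lambda>n. b (Suc n))"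
  proof (intro ext)
    fix n
    show "k * x * ((if N \<le> n then M n else 0) + (if n = N - 1 then M (N - 1) else 0)) = b (Suc n)"
      unfolding b_def using N by (cases "Suc n < N"; cases "Suc n = N") (auto simp: algebra_simps)
  qed
  ultimately have "(\<lambda>n. b (Suc n)) sums (k * x * (w + M (N - 1)))" by simp
  hence "b sums (k * x * (w + M (N - 1)) + b 0)" by (simp only: sums_Suc_iff)
  moreover have "b 0 = 0" unfolding b_def using N by simp
  ultimately have sb: "b sums (k * x * (w + M (N - 1)))" by simp
  have "(\<lambda>i. b i - (k * x + 1) * (if N \<le> i then M i else 0)) sums (k * x * (w + M (N - 1)) - (k * x + 1) * w)"
    by (intro sums_diff sums_mult sb sw)
  moreover have "(\<lambda>i. b i - (k * x + 1) * (if N \<le> i then M i else 0))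
      = (\<lambda>i. (if N \<le> i then 1 else 0) * S_rhs_M k r x M i)"
    unfolding b_def S_rhs_M_def using N by (auto simp: algebra_simps)
  ultimately have "(\<lambda>i. (if N \<le> i then 1 else 0) * S_rhs_M k r x M i) sums (- w + k * x * M (N - 1))"
    by (simp add: algebra_simps)
  thus ?thesis unfolding w_def by (rule sums_unique[symmetric])
qed



lemma reduce_deriv:
  assumes sol: "S_solution N k r \<alpha> xs Ms" and k: "k > 0" and N: "N \<ge> 1"
    and t: "t \<ge> 0" and j: "j \<in> {1..N+5}"
  shows "((\<lambda>s. reduce N (xs s) (Ms s) j) has_real_derivative F N k r \<alpha> (reduce N (xs t) (Ms t)) j) (at t within {0..})"
proof -
  have Mt: "inX (Ms t)" by (rule sol_inX[OF sol t])
  have derM: "\<And>i. ((\<lambda>s. Ms s i) has_real_derivative S_rhs_M k r (xs t) (Ms t) i) (at t within {0..})"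
    using sol t unfolding S_solution_def by auto
  have derx: "(xs has_real_derivative S_rhs_x N k \<alpha> (xs t) (Ms t)) (at t within {0..})"
    using sol t unfolding S_solution_def by auto
  consider "j = 1" | "j = 2" | "j = 3" | "j = 4" | "5 \<le> j \<and> j \<le> N + 5" using j by force
  thus ?thesis
  proof cases
    case 1
    have e: "(\<lambda>s. reduce N (xs s) (Ms s) j) = xs" unfolding reduce_def 1 by simp
    show ?thesis unfolding e using derx unfolding 1 F_def reduce_def S_rhs_x_def
      by (simp add: algebra_simps)
  next
    case 2
    have e: "(\<lambda>s. reduce N (xs s) (Ms s) j) = (\<lambda>s. \<Sum>i. 1 * Ms s i)" unfolding reduce_def 2 by simp
    show ?thesis unfolding e using series_deriv[OF sol t k, of "\<lambda>_. 1"] sum_rhs_1[OF Mt, of k r "xs t"]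
      unfolding 2 F_def reduce_def by simp
  next
    case 3
    have e: "(\<lambda>s. reduce N (xs s) (Ms s) j) = (\<lambda>s. \<Sum>i. (if N + 1 \<le> i then real i else 0) * Ms s i)"
      apply (rule ext) apply (simp add: reduce_def 3) apply (rule arg_cong[where f=suminf]) by auto
    have d: "((\<lambda>s. \<Sum>i. (if N + 1 \<le> i then real i else 0) * Ms s i) has_real_derivative
      (\<Sum>i. (if N + 1 \<le> i then real i else 0) * S_rhs_M k r (xs t) (Ms t) i)) (at t within {0..})"
      by (rule series_deriv[OF sol t k]) simp
    have v: "(\<Sum>i. (if N + 1 \<le> i then real i else 0) * S_rhs_M k r (xs t) (Ms t) i) = F N k r \<alpha> (reduce N (xs t) (Ms t)) j"
      unfolding 3 F_def reduce_def using sum_rhs_v[OF Mt N, of k r "xs t"] by simp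
    show ?thesis unfolding e v[symmetric] by (rule d)
  next
    case 4
    have e: "(\<lambda>s. reduce N (xs s) (Ms s) j) = (\<lambda>s. \<Sum>i. (if N \<le> i then 1 else 0) * Ms s i)"
      apply (rule ext) apply (simp add: reduce_def 4) apply (rule arg_cong[where f=suminf]) by auto
    have "N + 4 \<noteq> 4" "N + 4 \<noteq> 3" "N + 4 \<noteq> 2" "N + 4 \<noteq> 1" "N + 4 - 5 = N - 1" using N by auto
    hence v: "(\<Sum>i. (if N \<le> i then 1 else 0) * S_rhs_M k r (xs t) (Ms t) i) = F N k r \<alpha> (reduce N (xs t) (Ms t)) j"
      unfolding 4 F_def reduce_def using sum_rhs_w[OF Mt N, of k r "xs t"] N by simp
    have d: "((\<lambda>s. \<Sum>i. (if N \<le> i then 1 else 0) * Ms s i) has_real_derivative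
      (\<Sum>i. (if N \<le> i then 1 else 0) * S_rhs_M k r (xs t) (Ms t) i)) (at t within {0..})"
      by (rule series_deriv[OF sol t k]) simp
    show ?thesis unfolding e v[symmetric] by (rule d)
  next
    case 5
    have e: "(\<lambda>s. reduce N (xs s) (Ms s) j) = (\<lambda>s. Ms s (j - 5))"
      unfolding reduce_def using 5 by simp
    show ?thesis
    proof (cases "j = 5")
      case True
      thus ?thesis unfolding e using derM[of 0] unfolding F_def reduce_def S_rhs_M_def
        by (simp add: algebra_simps)
    next
      case False
      hence j6: "6 \<le> j" "j - 5 \<noteq> 0" "j - 1 \<noteq> 1" "j - 1 \<noteq> 2" "j - 1 \<noteq> 3" "j - 1 \<noteq> 4"
         "5 \<le> j - 1" "j - 1 \<le> N + 5" "j - 1 - 5 = j - 5 - 1" using 5 by auto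
      thus ?thesis unfolding e using derM[of "j - 5"] 5 unfolding F_def reduce_def S_rhs_M_def
        by (simp add: algebra_simps)
    qed
  qed
qed

lemma reduce_F_solution:
  assumes sol: "S_solution N k r \<alpha> xs Ms" and k: "k > 0" and N: "N \<ge> 1"
  shows "F_solution_on N k r \<alpha> T (\<lambda>s. reduce N (xs s) (Ms s))"
  unfolding F_solution_on_def
proof (intro ballI)
  fix t j assume t: "t \<in> {0..<T}" and j: "j \<in> {1..N+5}"
  show "((\<lambda>s. reduce N (xs s) (Ms s) j) has_real_derivative F N k r \<alpha> (reduce N (xs t) (Ms t)) j) (at t within {0..<T})"
    by (rule DERIV_subset[OF reduce_deriv[OF sol k N _ j]]) (use t in auto)
qed



lemma wdiff:
  assumes M: "inX M" and L: "inX L" and c: "\<And>i. \<bar>c i\<bar> \<le> real i + 1"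
  shows "\<bar>(\<Sum>i. c i * M i) - (\<Sum>i. c i * L i)\<bar> \<le> (\<Sum>i. (real i + 1) * \<bar>M i - L i\<bar>)"
proof -
  have sM: "summable (\<lambda>i. c i * M i)" and sL: "summable (\<lambda>i. c i * L i)"
    using inX_weight[OF M c] inX_weight[OF L c] by auto
  have sD: "summable (\<lambda>i. (real i + 1) * \<bar>M i - L i\<bar>)" by (rule inX_diff[OF M L])
  have le: "\<bar>c i * M i - c i * L i\<bar> \<le> (real i + 1) * \<bar>M i - L i\<bar>" for i
    using c[of i] by (simp add: right_diff_distrib[symmetric] abs_mult mult_right_mono)
  have sa: "summable (\<lambda>i. \<bar>c i * M i - c i * L i\<bar>)"
    by (rule summable_comparison_test'[OF sD, of 0]) (use le in auto)
  have "(\<Sum>i. c i * M i) - (\<Sum>i. c i * L i) = (\<Sum>i. c i * M i - c i * L i)"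
    using suminf_diff[OF sM sL] by simp
  also have "\<bar>\<dots>\<bar> \<le> (\<Sum>i. \<bar>c i * M i - c i * L i\<bar>)" by (rule summable_rabs[OF sa])
  also have "\<dots> \<le> (\<Sum>i. (real i + 1) * \<bar>M i - L i\<bar>)" by (rule suminf_le[OF le sa sD])
  finally show ?thesis .
qed

lemma fdist_parts:
  "fdist N U V = \<bar>U 1 - V 1\<bar> + \<bar>U 2 - V 2\<bar> + \<bar>U 3 - V 3\<bar> + \<bar>U 4 - V 4\<bar>
     + (\<Sum>i\<le>N. \<bar>U (i + 5) - V (i + 5)\<bar>)"
proof -
  have u: "{1..N+5} = {1..4} \<union> {5..N+5}" by auto
  have "fdist N U V = (\<Sum>j\<in>{1..4}. \<bar>U j - V j\<bar>) + (\<Sum>j\<in>{5..N+5}. \<bar>U j - V j\<bar>)"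
    unfolding fdist_def u by (rule sum.union_disjoint) auto
  moreover have "{1..4::nat} = {1,2,3,4}" by auto
  moreover have "(\<Sum>j\<in>{5..N+5}. \<bar>U j - V j\<bar>) = (\<Sum>i\<le>N. \<bar>U (i + 5) - V (i + 5)\<bar>)"
    using sum.shift_bounds_cl_nat_ivl[of "\<lambda>j. \<bar>U j - V j\<bar>" 0 5 N] by (simp add: atLeast0AtMost)
  ultimately show ?thesis by simp
qed

lemma reduce_simps:
  "reduce N x M 1 = x"
  "reduce N x M 2 = (\<Sum>i. 1 * M i)"
  "reduce N x M 3 = (\<Sum>i. (if N + 1 \<le> i then real i else 0) * M i)"
  "reduce N x M 4 = (\<Sum>i. (if N \<le> i then 1 else 0) * M i)"
  "i \<le> N \<Longrightarrow> reduce N x M (i + 5) = M i"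
  unfolding reduce_def by (auto intro!: arg_cong[where f=suminf])

lemma fdist_le_Xdist:
  assumes M: "inX M" and L: "inX L"
  shows "fdist N (reduce N x M) (reduce N y L) \<le> 4 * Xdist x M y L"
proof -
  define D where "D = (\<Sum>i. (real i + 1) * \<bar>M i - L i\<bar>)"
  have sD: "summable (\<lambda>i. (real i + 1) * \<bar>M i - L i\<bar>)" by (rule inX_diff[OF M L])
  have D0: "D \<ge> 0" unfolding D_def by (intro suminf_nonneg sD) simp
  have a2: "\<bar>reduce N x M 2 - reduce N y L 2\<bar> \<le> D" unfolding reduce_simps D_def
    by (rule wdiff[OF M L]) simp
  have a3: "\<bar>reduce N x M 3 - reduce N y L 3\<bar> \<le> D" unfolding reduce_simps D_def
    by (rule wdiff[OF M L]) simp
  have a4: "\<bar>reduce N x M 4 - reduce N y L 4\<bar> \<le> D" unfolding reduce_simps D_def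
    by (rule wdiff[OF M L]) simp
  have "(\<Sum>i\<le>N. \<bar>reduce N x M (i + 5) - reduce N y L (i + 5)\<bar>) = (\<Sum>i\<le>N. \<bar>M i - L i\<bar>)"
    by (intro sum.cong) (auto simp: reduce_simps)
  also have "\<dots> \<le> (\<Sum>i\<le>N. (real i + 1) * \<bar>M i - L i\<bar>)"
    by (intro sum_mono) (simp add: mult_le_cancel_right1)
  also have "\<dots> \<le> D" unfolding D_def by (rule sum_le_suminf[OF sD]) auto
  finally have a5: "(\<Sum>i\<le>N. \<bar>reduce N x M (i + 5) - reduce N y L (i + 5)\<bar>) \<le> D" .
  have "Xdist x M y L = \<bar>x - y\<bar> + D" unfolding Xdist_def Xnorm_def D_def by simp
  moreover have a1: "\<bar>reduce N x M 1 - reduce N y L 1\<bar> = \<bar>x - y\<bar>" by (simp only: reduce_simps)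
  ultimately show ?thesis unfolding fdist_parts a1 using a2 a3 a4 a5 D0 by linarith
qed



lemma Xdist_upper:
  assumes xM: "inXplus x M" and yL: "inXplus y L"
  shows "Xdist x M y L \<le> (real N + 3) * fdist N (reduce N x M) (reduce N y L)
    + 2 * (\<Sum>i<I. (real i + 1) * \<bar>M i - L i\<bar>) + 2 * (\<Sum>i. (real (i + I) + 1) * \<bar>L (i + I)\<bar>)"
proof -
  have M: "inX M" and L: "inX L" and M0: "\<And>i. M i \<ge> 0" using xM yL unfolding inXplus_def by auto
  define d where "d = (\<lambda>i. M i - L i)"
  define p where "p = (\<lambda>i. (real i + 1) * max 0 (L i - M i))"
  define fd where "fd = fdist N (reduce N x M) (reduce N y L)"
  have sD: "summable (\<lambda>i. (real i + 1) * \<bar>M i - L i\<bar>)" by (rule inX_diff[OF M L])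
  have cw: "\<And>i. \<bar>real i + 1\<bar> \<le> real i + 1" by simp
  have sMw: "summable (\<lambda>i. (real i + 1) * M i)" by (rule inX_weight[OF M cw])
  have sLw: "summable (\<lambda>i. (real i + 1) * L i)" by (rule inX_weight[OF L cw])
  have sdw: "summable (\<lambda>i. (real i + 1) * d i)"
    unfolding d_def using summable_diff[OF sMw sLw] by (simp add: right_diff_distrib)
  have pl: "p i \<le> (real i + 1) * \<bar>M i - L i\<bar>" for i
    unfolding p_def by (intro mult_left_mono) auto
  have p0: "p i \<ge> 0" for i unfolding p_def by simp
  have sp: "summable p" by (rule summable_comparison_test'[OF sD, of 0]) (use pl p0 in auto)
  have pt: "(real i + 1) * \<bar>M i - L i\<bar> = (real i + 1) * d i + 2 * p i" for i
    unfolding p_def d_def by (simp add: algebra_simps abs_if max_def)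
  have Dsplit: "(\<Sum>i. (real i + 1) * \<bar>M i - L i\<bar>) = (\<Sum>i. (real i + 1) * d i) + 2 * (\<Sum>i. p i)"
    unfolding pt using suminf_add[OF sdw summable_mult[OF sp, of 2]] suminf_mult[OF sp, of 2] by simp
  have sLt: "summable (\<lambda>i. (real (i + I) + 1) * \<bar>L (i + I)\<bar>)"
    using summable_ignore_initial_segment[OF L[unfolded inX_def], of I] by simp
  have "(\<Sum>i. p i) = (\<Sum>i. p (i + I)) + sum p {..<I}"
    by (rule suminf_split_initial_segment[OF sp])
  also have "(\<Sum>i. p (i + I)) \<le> (\<Sum>i. (real (i + I) + 1) * \<bar>L (i + I)\<bar>)"
  proof (rule suminf_le)
    fix i show "p (i + I) \<le> (real (i + I) + 1) * \<bar>L (i + I)\<bar>"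
      unfolding p_def using M0[of "i + I"] by (intro mult_left_mono) auto
  qed (use summable_ignore_initial_segment[OF sp] sLt in auto)
  also have "sum p {..<I} \<le> (\<Sum>i<I. (real i + 1) * \<bar>M i - L i\<bar>)"
    by (intro sum_mono pl)
  finally have Pb: "(\<Sum>i. p i) \<le> (\<Sum>i. (real (i + I) + 1) * \<bar>L (i + I)\<bar>) + (\<Sum>i<I. (real i + 1) * \<bar>M i - L i\<bar>)"
    by simp
  define c3 where "c3 = (\<lambda>i. if N + 1 \<le> i then real i else 0)"
  define c4 where "c4 = (\<lambda>i::nat. if N \<le> i then (1::real) else 0)"
  have s3M: "summable (\<lambda>i. c3 i * M i)" and s3L: "summable (\<lambda>i. c3 i * L i)"
    unfolding c3_def by (rule inX_weight[OF M], simp, rule inX_weight[OF L], simp)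
  have s4M: "summable (\<lambda>i. c4 i * M i)" and s4L: "summable (\<lambda>i. c4 i * L i)"
    unfolding c4_def by (rule inX_weight[OF M], simp, rule inX_weight[OF L], simp)
  have q1: "(\<lambda>i. if i \<in> {..<N} then (real i + 1) * d i else 0) sums (\<Sum>i<N. (real i + 1) * d i)"
    by (rule sums_If_finite_set) simp
  have q2: "(\<lambda>i. if i = N then real N * d N else 0) sums (real N * d N)" by (rule sums_single)
  have q3: "(\<lambda>i. c3 i * M i - c3 i * L i) sums ((\<Sum>i. c3 i * M i) - (\<Sum>i. c3 i * L i))"
    by (intro sums_diff summable_sums s3M s3L)
  have q4: "(\<lambda>i. c4 i * M i - c4 i * L i) sums ((\<Sum>i. c4 i * M i) - (\<Sum>i. c4 i * L i))"
    by (intro sums_diff summable_sums s4M s4L)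
  have "(\<lambda>i. (if i \<in> {..<N} then (real i + 1) * d i else 0) + (if i = N then real N * d N else 0)
      + (c3 i * M i - c3 i * L i) + (c4 i * M i - c4 i * L i)) sums
      ((\<Sum>i<N. (real i + 1) * d i) + real N * d N + ((\<Sum>i. c3 i * M i) - (\<Sum>i. c3 i * L i))
       + ((\<Sum>i. c4 i * M i) - (\<Sum>i. c4 i * L i)))"
    by (intro sums_add q1 q2 q3 q4)
  moreover have "(\<lambda>i. (if i \<in> {..<N} then (real i + 1) * d i else 0) + (if i = N then real N * d N else 0)
      + (c3 i * M i - c3 i * L i) + (c4 i * M i - c4 i * L i)) = (\<lambda>i. (real i + 1) * d i)"
  proof (intro ext)
    fix i show "(if i \<in> {..<N} then (real i + 1) * d i else 0) + (if i = N then real N * d N else 0)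
      + (c3 i * M i - c3 i * L i) + (c4 i * M i - c4 i * L i) = (real i + 1) * d i"
      unfolding c3_def c4_def d_def by (cases "i < N"; cases "i = N") (auto simp: algebra_simps)
  qed
  ultimately have Ssum: "(\<Sum>i. (real i + 1) * d i) = (\<Sum>i<N. (real i + 1) * d i) + real N * d N
      + ((\<Sum>i. c3 i * M i) - (\<Sum>i. c3 i * L i)) + ((\<Sum>i. c4 i * M i) - (\<Sum>i. c4 i * L i))"
    by (simp add: sums_unique[symmetric])
  have fdp: "fd = \<bar>x - y\<bar> + \<bar>(\<Sum>i. 1 * M i) - (\<Sum>i. 1 * L i)\<bar>
      + \<bar>(\<Sum>i. c3 i * M i) - (\<Sum>i. c3 i * L i)\<bar> + \<bar>(\<Sum>i. c4 i * M i) - (\<Sum>i. c4 i * L i)\<bar>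
      + (\<Sum>i\<le>N. \<bar>d i\<bar>)"
  proof -
    have "(\<Sum>i\<le>N. \<bar>reduce N x M (i + 5) - reduce N y L (i + 5)\<bar>) = (\<Sum>i\<le>N. \<bar>d i\<bar>)"
      unfolding d_def by (intro sum.cong) (auto simp: reduce_simps)
    thus ?thesis unfolding fd_def fdist_parts c3_def c4_def by (simp only: reduce_simps)
  qed
  have P: "(\<Sum>i\<le>N. \<bar>d i\<bar>) = (\<Sum>i<N. \<bar>d i\<bar>) + \<bar>d N\<bar>"
    by (simp add: lessThan_Suc_atMost[symmetric])
  have "\<bar>\<Sum>i<N. (real i + 1) * d i\<bar> \<le> (\<Sum>i<N. real N * \<bar>d i\<bar>)"
  proof -
    have "\<bar>\<Sum>i<N. (real i + 1) * d i\<bar> \<le> (\<Sum>i<N. \<bar>(real i + 1) * d i\<bar>)" by (rule sum_abs)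
    also have "\<dots> \<le> (\<Sum>i<N. real N * \<bar>d i\<bar>)"
    proof (rule sum_mono)
      fix i assume "i \<in> {..<N}"
      hence "real i + 1 \<le> real N" by auto
      thus "\<bar>(real i + 1) * d i\<bar> \<le> real N * \<bar>d i\<bar>" by (simp add: abs_mult mult_right_mono)
    qed
    finally show ?thesis .
  qed
  moreover have "\<bar>(\<Sum>i<N. (real i + 1) * d i) + real N * d N\<bar> \<le> \<bar>\<Sum>i<N. (real i + 1) * d i\<bar> + real N * \<bar>d N\<bar>"
    using abs_triangle_ineq[of "\<Sum>i<N. (real i + 1) * d i" "real N * d N"] by (simp add: abs_mult)
  moreover have "real N * (\<Sum>i\<le>N. \<bar>d i\<bar>) = (\<Sum>i<N. real N * \<bar>d i\<bar>) + real N * \<bar>d N\<bar>"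
    unfolding P by (simp add: sum_distrib_left distrib_left)
  ultimately have "\<bar>(\<Sum>i<N. (real i + 1) * d i) + real N * d N\<bar> \<le> real N * (\<Sum>i\<le>N. \<bar>d i\<bar>)"
    by linarith
  hence A: "\<bar>(\<Sum>i<N. (real i + 1) * d i) + real N * d N\<bar> \<le> real N * fd"
  proof -
    have "(\<Sum>i\<le>N. \<bar>d i\<bar>) \<le> fd" unfolding fdp by simp
    hence "real N * (\<Sum>i\<le>N. \<bar>d i\<bar>) \<le> real N * fd" by (rule mult_left_mono) simp
    thus ?thesis using \<open>\<bar>(\<Sum>i<N. (real i + 1) * d i) + real N * d N\<bar> \<le> real N * (\<Sum>i\<le>N. \<bar>d i\<bar>)\<close> by linarith
  qed
  have B: "\<bar>(\<Sum>i. c3 i * M i) - (\<Sum>i. c3 i * L i)\<bar> \<le> fd" "\<bar>(\<Sum>i. c4 i * M i) - (\<Sum>i. c4 i * L i)\<bar> \<le> fd"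
    "\<bar>x - y\<bar> \<le> fd"
    unfolding fdp by simp_all
  have "Xdist x M y L = \<bar>x - y\<bar> + (\<Sum>i. (real i + 1) * d i) + 2 * (\<Sum>i. p i)"
    unfolding Xdist_def Xnorm_def using Dsplit by simp
  also have "\<dots> \<le> fd + (real N * fd + fd + fd) + 2 * (\<Sum>i. p i)"
    unfolding Ssum using A B by linarith
  also have "\<dots> = (real N + 3) * fd + 2 * (\<Sum>i. p i)" by (simp add: algebra_simps)
  finally show ?thesis unfolding fd_def using Pb by linarith
qed



lemma Xdist_nonneg: "inX M \<Longrightarrow> inX L \<Longrightarrow> Xdist x M y L \<ge> 0"
  unfolding Xdist_def Xnorm_def using inX_diff[of M L]
  by (simp add: suminf_nonneg add_nonneg_nonneg)

lemma comp_le_Xdist: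
  assumes "inX M" "inX L"
  shows "\<bar>M i - L i\<bar> \<le> Xdist x M y L"
proof -
  have "\<bar>M i - L i\<bar> \<le> (real i + 1) * \<bar>M i - L i\<bar>" by (simp add: mult_le_cancel_right1)
  also have "\<dots> = (\<Sum>j\<in>{i}. (real j + 1) * \<bar>M j - L j\<bar>)" by simp
  also have "\<dots> \<le> (\<Sum>j. (real j + 1) * \<bar>M j - L j\<bar>)"
    by (rule sum_le_suminf[OF inX_diff[OF assms]]) auto
  also have "\<dots> \<le> Xdist x M y L" by (rule Xdist_ge_sum)
  finally show ?thesis .
qed

lemma x_le_fdist: "\<bar>x - y\<bar> \<le> fdist N (reduce N x M) (reduce N y L)"
proof -
  have h: "\<bar>reduce N x M 1 - reduce N y L 1\<bar> = \<bar>x - y\<bar>" by (simp only: reduce_simps)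
  show ?thesis unfolding fdist_parts h by (simp add: sum_nonneg)
qed

definition gfun :: "real \<Rightarrow> real \<Rightarrow> (nat \<Rightarrow> real) \<Rightarrow> (real \<Rightarrow> real) \<Rightarrow> (real \<Rightarrow> nat \<Rightarrow> real) \<Rightarrow> nat \<Rightarrow> real \<Rightarrow> real" where
  "gfun k xe Me xs Ms i s = (if i = 0 then - k * (xs s - xe) * Me 0
     else k * xs s * (Ms s (i - 1) - Me (i - 1)) + k * (xs s - xe) * (Me (i - 1) - Me i))"

lemma rhs_split:
  assumes "S_rhs_M k r xe Me i = 0"
  shows "S_rhs_M k r x M i = - (k * x + 1) * (M i - Me i) + gfun k xe Me (\<lambda>_. x) (\<lambda>_. M) i 0"
  using assms unfolding S_rhs_M_def gfun_def by (cases "i = 0") (auto simp: algebra_simps)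

lemma ode_step:
  assumes sol: "S_solution N k r \<alpha> xs Ms" and k: "k > 0"
    and eq: "S_rhs_M k r xe Me i = 0" and Me: "inX Me"
    and mu: "0 < \<mu>" "\<mu> < 1" and G: "G \<ge> 0"
    and gb: "\<And>s. s \<ge> 0 \<Longrightarrow> \<bar>gfun k xe Me xs Ms i s\<bar> \<le> G * Xdist (xs 0) (Ms 0) xe Me * exp (- \<mu> * s)"
    and t: "t \<ge> 0"
  shows "\<bar>Ms t i - Me i\<bar> \<le> (1 + G / (1 - \<mu>)) * Xdist (xs 0) (Ms 0) xe Me * exp (- \<mu> * t)"
proof -
  define X0 where "X0 = Xdist (xs 0) (Ms 0) xe Me"
  have X0: "X0 \<ge> 0" unfolding X0_def by (rule Xdist_nonneg[OF sol_inX[OF sol] Me]) simp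
  have der: "((\<lambda>s. Ms s i - Me i) has_real_derivative
      (- (k * xs s + 1) * (Ms s i - Me i) + gfun k xe Me xs Ms i s)) (at s within {0..})" if s: "s \<ge> 0" for s
  proof -
    have "((\<lambda>s. Ms s i - Me i) has_real_derivative S_rhs_M k r (xs s) (Ms s) i - 0) (at s within {0..})"
      using sol s unfolding S_solution_def by (intro DERIV_diff DERIV_const) auto
    moreover have "S_rhs_M k r (xs s) (Ms s) i - 0 = - (k * xs s + 1) * (Ms s i - Me i) + gfun k xe Me xs Ms i s"
      using rhs_split[OF eq, of "xs s" "Ms s"] unfolding gfun_def by simp
    ultimately show ?thesis by simp
  qed
  have a1: "k * xs s + 1 \<ge> 1" if "s \<ge> 0" for s
    using sol_inXplus[OF sol that] k unfolding inXplus_def by simp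
  have gb': "\<And>s. s \<ge> 0 \<Longrightarrow> \<bar>gfun k xe Me xs Ms i s\<bar> \<le> (G * X0) * exp (- \<mu> * s)"
    using gb unfolding X0_def by simp
  have "\<bar>Ms t i - Me i\<bar> \<le> (\<bar>Ms 0 i - Me i\<bar> + G * X0 / (1 - \<mu>)) * exp (- \<mu> * t)"
    by (rule ode_exp_bound[where y = "\<lambda>s. Ms s i - Me i" and a = "\<lambda>s. k * xs s + 1", OF der a1 gb' mu t])
  also have "\<bar>Ms 0 i - Me i\<bar> \<le> X0" unfolding X0_def by (rule comp_le_Xdist[OF sol_inX[OF sol] Me]) simp
  hence "(\<bar>Ms 0 i - Me i\<bar> + G * X0 / (1 - \<mu>)) * exp (- \<mu> * t) \<le> (X0 + G * X0 / (1 - \<mu>)) * exp (- \<mu> * t)"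
    by (intro mult_right_mono) auto
  also have "X0 + G * X0 / (1 - \<mu>) = (1 + G / (1 - \<mu>)) * X0" by (simp add: algebra_simps)
  finally show ?thesis unfolding X0_def by simp
qed



theorem theorem4p1:
  fixes N :: nat and k r \<alpha> xe :: real and Me :: "nat \<Rightarrow> real"
  assumes "N \<ge> 1" and "k > 0" and "r > 0" and "\<alpha> > 0"
    and "\<alpha> / r < mustar N"
    and "S_equilibrium N k r \<alpha> xe Me"
    and "F_locally_exp_stable N k r \<alpha> (reduce N xe Me)"
  shows "S_locally_asymptotically_stable N k r \<alpha> xe Me"
proof -
  note N = assms(1) and k = assms(2)
  have eqX: "inXplus xe Me" and eqM: "\<And>i. S_rhs_M k r xe Me i = 0"
    using assms(6) unfolding S_equilibrium_def by auto
  have Me: "inX Me" and Me0: "\<And>i. Me i \<ge> 0" and xe0: "xe \<ge> 0" using eqX unfolding inXplus_def by auto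
  obtain \<delta>F C lam where dF: "\<delta>F > 0" and lam: "lam > 0" and
    Fb: "\<And>T U. T > 0 \<Longrightarrow> F_solution_on N k r \<alpha> T U \<Longrightarrow> fdist N (U 0) (reduce N xe Me) < \<delta>F \<Longrightarrow>
          (\<forall>t\<in>{0..<T}. fdist N (U t) (reduce N xe Me) \<le> C * exp (- lam * t) * fdist N (U 0) (reduce N xe Me))"
    using assms(7) unfolding F_locally_exp_stable_def by blast
  define \<mu> where "\<mu> = min lam 1 / 2"
  have mu: "0 < \<mu>" "\<mu> < 1" "\<mu> \<le> lam" unfolding \<mu>_def using lam by auto
  define C1 where "C1 = 4 * \<bar>C\<bar>"
  have C1: "C1 \<ge> 0" unfolding C1_def by simp
  define \<delta>1 where "\<delta>1 = min (\<delta>F / 4) 1"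
  have d1: "\<delta>1 > 0" "\<delta>1 \<le> 1" "\<delta>1 \<le> \<delta>F / 4" unfolding \<delta>1_def using dF by auto
  define Xd where "Xd = (\<lambda>(xs :: real \<Rightarrow> real) (Ms :: real \<Rightarrow> nat \<Rightarrow> real) t. Xdist (xs t) (Ms t) xe Me)"
  have Xd0: "Xd xs Ms t \<ge> 0" if "S_solution N k r \<alpha> xs Ms" "t \<ge> 0" for xs Ms t
    unfolding Xd_def by (rule Xdist_nonneg[OF sol_inX[OF that] Me])
  have fin: "fdist N (reduce N (xs t) (Ms t)) (reduce N xe Me) \<le> C1 * Xd xs Ms 0 * exp (- \<mu> * t)"
    if sol: "S_solution N k r \<alpha> xs Ms" and small: "Xd xs Ms 0 < \<delta>1" and t: "t \<ge> 0" for xs Ms t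
  proof -
    define U where "U = (\<lambda>s. reduce N (xs s) (Ms s))"
    define f0 where "f0 = fdist N (U 0) (reduce N xe Me)"
    have Fs: "F_solution_on N k r \<alpha> (t + 1) U" unfolding U_def by (rule reduce_F_solution[OF sol k N])
    have f04: "f0 \<le> 4 * Xd xs Ms 0" unfolding f0_def U_def Xd_def
      by (rule fdist_le_Xdist[OF sol_inX[OF sol] Me]) simp
    have f0n: "f0 \<ge> 0" unfolding f0_def fdist_def by (simp add: sum_nonneg)
    have "f0 < \<delta>F" using f04 small d1 by linarith
    hence "fdist N (U t) (reduce N xe Me) \<le> C * exp (- lam * t) * f0"
      using Fb[OF _ Fs] t unfolding f0_def by auto
    also have "\<dots> \<le> \<bar>C\<bar> * exp (- lam * t) * f0"
      using f0n by (intro mult_right_mono) auto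
    also have "\<dots> \<le> \<bar>C\<bar> * exp (- \<mu> * t) * (4 * Xd xs Ms 0)"
    proof (intro mult_mono mult_left_mono f04)
      show "exp (- lam * t) \<le> exp (- \<mu> * t)" using mu t by (simp add: mult_right_mono)
    qed (auto simp: f0n)
    also have "\<dots> = C1 * Xd xs Ms 0 * exp (- \<mu> * t)" unfolding C1_def by simp
    finally show ?thesis unfolding U_def .
  qed
  have xb: "\<bar>xs t - xe\<bar> \<le> C1 * Xd xs Ms 0 * exp (- \<mu> * t)"
    if sol: "S_solution N k r \<alpha> xs Ms" and small: "Xd xs Ms 0 < \<delta>1" and t: "t \<ge> 0" for xs Ms t
    using x_le_fdist[of "xs t" xe N "Ms t" Me] fin[OF that] by linarith
  define Bm where "Bm = (\<Sum>i. (real i + 1) * \<bar>Me i\<bar>)"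
  have MeB: "Me i \<le> Bm" for i
  proof -
    have "Me i \<le> (real i + 1) * \<bar>Me i\<bar>" using Me0[of i] by (simp add: mult_le_cancel_right1)
    also have "\<dots> = (\<Sum>j\<in>{i}. (real j + 1) * \<bar>Me j\<bar>)" by simp
    also have "\<dots> \<le> Bm" unfolding Bm_def
      by (rule sum_le_suminf) (use Me in \<open>auto simp: inX_def\<close>)
    finally show ?thesis .
  qed
  have Bm0: "Bm \<ge> 0" using MeB[of 0] Me0[of 0] by linarith
  define Xb where "Xb = xe + C1"
  have xsb: "\<bar>xs s\<bar> \<le> Xb"
    if sol: "S_solution N k r \<alpha> xs Ms" and small: "Xd xs Ms 0 < \<delta>1" and s: "s \<ge> 0" for xs Ms s
  proof -
    have x0: "xs s \<ge> 0" using sol_inXplus[OF sol s] unfolding inXplus_def by simp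
    have "C1 * Xd xs Ms 0 * exp (- \<mu> * s) \<le> C1 * 1 * 1"
      using small d1 C1 Xd0[OF sol, of 0] mu s by (intro mult_mono) auto
    thus ?thesis using xb[OF that] x0 unfolding Xb_def by auto
  qed
  have Xb0: "Xb \<ge> 0" unfolding Xb_def using xe0 C1 by simp
  have comp: "\<exists>K\<ge>0. \<forall>xs Ms. S_solution N k r \<alpha> xs Ms \<and> Xd xs Ms 0 < \<delta>1 \<longrightarrow>
      (\<forall>t\<ge>0. \<bar>Ms t i - Me i\<bar> \<le> K * Xd xs Ms 0 * exp (- \<mu> * t))" for i
  proof (induction i)
    case 0
    define G where "G = k * Bm * C1"
    have G: "G \<ge> 0" unfolding G_def using k Bm0 C1 by simp
    show ?case
    proof (intro exI[of _ "1 + G / (1 - \<mu>)"] conjI allI impI)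
      show "0 \<le> 1 + G / (1 - \<mu>)" using G mu by simp
      fix xs Ms t assume H: "S_solution N k r \<alpha> xs Ms \<and> Xd xs Ms 0 < \<delta>1" and t: "(0::real) \<le> t"
      have gb: "\<bar>gfun k xe Me xs Ms 0 s\<bar> \<le> G * Xdist (xs 0) (Ms 0) xe Me * exp (- \<mu> * s)" if s: "s \<ge> 0" for s
      proof -
        have "\<bar>gfun k xe Me xs Ms 0 s\<bar> = k * (\<bar>xs s - xe\<bar> * Me 0)"
          unfolding gfun_def using k Me0[of 0] by (simp add: abs_mult)
        also have "\<dots> \<le> k * ((C1 * Xd xs Ms 0 * exp (- \<mu> * s)) * Bm)"
          using xb[of xs Ms s] H s MeB[of 0] Me0[of 0] k
          by (intro mult_left_mono mult_mono) auto
        finally show ?thesis unfolding G_def Xd_def by (simp add: algebra_simps)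
      qed
      show "\<bar>Ms t 0 - Me 0\<bar> \<le> (1 + G / (1 - \<mu>)) * Xd xs Ms 0 * exp (- \<mu> * t)"
        using ode_step[OF _ k eqM Me mu(1,2) G gb t] H unfolding Xd_def by auto
    qed
  next
    case (Suc j)
    then obtain K where K: "K \<ge> 0" and KB: "\<And>xs Ms t. S_solution N k r \<alpha> xs Ms \<Longrightarrow> Xd xs Ms 0 < \<delta>1 \<Longrightarrow> t \<ge> 0 \<Longrightarrow>
      \<bar>Ms t j - Me j\<bar> \<le> K * Xd xs Ms 0 * exp (- \<mu> * t)" by blast
    define G where "G = k * Xb * K + k * C1 * Bm"
    have G: "G \<ge> 0" unfolding G_def using k Bm0 C1 K Xb0 by simp
    show ?case
    proof (intro exI[of _ "1 + G / (1 - \<mu>)"] conjI allI impI)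
      show "0 \<le> 1 + G / (1 - \<mu>)" using G mu by simp
      fix xs Ms t assume H: "S_solution N k r \<alpha> xs Ms \<and> Xd xs Ms 0 < \<delta>1" and t: "(0::real) \<le> t"
      have gb: "\<bar>gfun k xe Me xs Ms (Suc j) s\<bar> \<le> G * Xdist (xs 0) (Ms 0) xe Me * exp (- \<mu> * s)" if s: "s \<ge> 0" for s
      proof -
        define E where "E = Xd xs Ms 0 * exp (- \<mu> * s)"
        have E0: "E \<ge> 0" unfolding E_def using Xd0[of xs Ms 0] H by simp
        have dM: "\<bar>Me j - Me (Suc j)\<bar> \<le> Bm" using MeB[of j] MeB[of "Suc j"] Me0[of j] Me0[of "Suc j"] by linarith
        have "\<bar>gfun k xe Me xs Ms (Suc j) s\<bar> \<le> k * (\<bar>xs s\<bar> * \<bar>Ms s j - Me j\<bar>) + k * (\<bar>xs s - xe\<bar> * \<bar>Me j - Me (Suc j)\<bar>)"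
        proof -
          have "gfun k xe Me xs Ms (Suc j) s = k * xs s * (Ms s j - Me j) + k * (xs s - xe) * (Me j - Me (Suc j))"
            unfolding gfun_def by simp
          also have "\<bar>\<dots>\<bar> \<le> \<bar>k * xs s * (Ms s j - Me j)\<bar> + \<bar>k * (xs s - xe) * (Me j - Me (Suc j))\<bar>"
            by (rule abs_triangle_ineq)
          also have "\<dots> = k * (\<bar>xs s\<bar> * \<bar>Ms s j - Me j\<bar>) + k * (\<bar>xs s - xe\<bar> * \<bar>Me j - Me (Suc j)\<bar>)"
            using k by (simp add: abs_mult)
          finally show ?thesis .
        qed
        also have "\<dots> \<le> k * (Xb * (K * E)) + k * ((C1 * E) * Bm)"
          using xsb[of xs Ms s] KB[of xs Ms s] xb[of xs Ms s] H s dM k unfolding E_def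
          by (intro add_mono mult_left_mono mult_mono) (auto simp: mult.assoc)
        also have "\<dots> = G * E" unfolding G_def by (simp add: algebra_simps)
        finally show ?thesis unfolding E_def Xd_def by (simp add: mult.assoc)
      qed
      show "\<bar>Ms t (Suc j) - Me (Suc j)\<bar> \<le> (1 + G / (1 - \<mu>)) * Xd xs Ms 0 * exp (- \<mu> * t)"
        using ode_step[OF _ k eqM Me mu(1,2) G gb t] H unfolding Xd_def by auto
    qed
  qed
  hence Kex: "\<forall>i. \<exists>K. K \<ge> 0 \<and> (\<forall>xs Ms. S_solution N k r \<alpha> xs Ms \<and> Xd xs Ms 0 < \<delta>1 \<longrightarrow>
      (\<forall>t\<ge>0. \<bar>Ms t i - Me i\<bar> \<le> K * Xd xs Ms 0 * exp (- \<mu> * t)))" by blast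
  obtain Kf where Kf': "\<forall>i. Kf i \<ge> 0 \<and> (\<forall>xs Ms. S_solution N k r \<alpha> xs Ms \<and> Xd xs Ms 0 < \<delta>1 \<longrightarrow>
      (\<forall>t\<ge>0. \<bar>Ms t i - Me i\<bar> \<le> Kf i * Xd xs Ms 0 * exp (- \<mu> * t)))"
    using choice[OF Kex] by (elim exE) (rule that)
  have Kf: "\<And>i. Kf i \<ge> 0" using Kf' by blast
  have KfB: "\<And>i xs Ms t. S_solution N k r \<alpha> xs Ms \<Longrightarrow> Xd xs Ms 0 < \<delta>1 \<Longrightarrow> t \<ge> 0 \<Longrightarrow>
      \<bar>Ms t i - Me i\<bar> \<le> Kf i * Xd xs Ms 0 * exp (- \<mu> * t)" using Kf' by blast
  define tl where "tl = (\<lambda>I. \<Sum>i. (real (i + I) + 1) * \<bar>Me (i + I)\<bar>)"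
  define Lc where "Lc = (\<lambda>I. (real N + 3) * C1 + 2 * (\<Sum>i<I. (real i + 1) * Kf i))"
  have Lc0: "Lc I \<ge> 0" for I unfolding Lc_def using C1 Kf by (simp add: sum_nonneg)
  have glob: "Xd xs Ms t \<le> Lc I * Xd xs Ms 0 * exp (- \<mu> * t) + 2 * tl I"
    if sol: "S_solution N k r \<alpha> xs Ms" and small: "Xd xs Ms 0 < \<delta>1" and t: "t \<ge> 0" for xs Ms t I
  proof -
    define E where "E = Xd xs Ms 0 * exp (- \<mu> * t)"
    have "Xd xs Ms t \<le> (real N + 3) * fdist N (reduce N (xs t) (Ms t)) (reduce N xe Me)
      + 2 * (\<Sum>i<I. (real i + 1) * \<bar>Ms t i - Me i\<bar>) + 2 * tl I"
      unfolding Xd_def tl_def by (rule Xdist_upper[OF sol_inXplus[OF sol t] eqX])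
    also have "(real N + 3) * fdist N (reduce N (xs t) (Ms t)) (reduce N xe Me) \<le> (real N + 3) * (C1 * E)"
      using fin[OF that] unfolding E_def by (intro mult_left_mono) (auto simp: mult.assoc)
    also have "(\<Sum>i<I. (real i + 1) * \<bar>Ms t i - Me i\<bar>) \<le> (\<Sum>i<I. (real i + 1) * (Kf i * E))"
      using KfB[OF that] unfolding E_def by (intro sum_mono mult_left_mono) (auto simp: mult.assoc)
    also have "(real N + 3) * (C1 * E) + 2 * (\<Sum>i<I. (real i + 1) * (Kf i * E)) = Lc I * E"
      unfolding Lc_def by (simp add: algebra_simps sum_distrib_right sum_distrib_left)
    finally show ?thesis unfolding E_def by (simp add: mult.assoc)
  qed
  have tl0: "\<exists>I. 2 * tl I < e" if epos: "e > 0" for e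
  proof -
    have sM: "summable (\<lambda>i. (real i + 1) * \<bar>Me i\<bar>)" using Me unfolding inX_def .
    obtain I where "\<forall>n\<ge>I. norm (\<Sum>i. (real (i + n) + 1) * \<bar>Me (i + n)\<bar>) < e / 2"
      using suminf_exist_split[OF _ sM, of "e/2"] epos by auto
    hence "norm (tl I) < e / 2" unfolding tl_def by auto
    hence "2 * tl I < e" using abs_ge_self[of "tl I"] by simp
    thus ?thesis by blast
  qed
  show ?thesis
    unfolding S_locally_asymptotically_stable_def
  proof (intro conjI allI impI)
    fix \<epsilon> :: real assume e: "\<epsilon> > 0"
    obtain I where I: "2 * tl I < \<epsilon> / 2" using tl0[of "\<epsilon>/2"] e by auto
    define \<delta> where "\<delta> = min \<delta>1 (\<epsilon> / (2 * (Lc I + 1)))"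
    have d: "\<delta> > 0" unfolding \<delta>_def using d1 e Lc0[of I] by auto
    show "\<exists>\<delta>>0. \<forall>xs Ms. S_solution N k r \<alpha> xs Ms \<and> Xdist (xs 0) (Ms 0) xe Me < \<delta> \<longrightarrow>
        (\<forall>t\<ge>0. Xdist (xs t) (Ms t) xe Me < \<epsilon>)"
    proof (intro exI[of _ \<delta>] conjI d allI impI)
      fix xs Ms t assume H: "S_solution N k r \<alpha> xs Ms \<and> Xdist (xs 0) (Ms 0) xe Me < \<delta>" and t: "(0::real) \<le> t"
      have sol: "S_solution N k r \<alpha> xs Ms" and sm: "Xd xs Ms 0 < \<delta>" using H unfolding Xd_def by auto
      have sm1: "Xd xs Ms 0 < \<delta>1" using sm unfolding \<delta>_def by simp
      have X00: "Xd xs Ms 0 \<ge> 0" by (rule Xd0[OF sol]) simp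
      have "Lc I * Xd xs Ms 0 * exp (- \<mu> * t) \<le> Lc I * \<delta> * 1"
        using Lc0[of I] sm X00 mu t by (intro mult_mono mult_left_mono) auto
      also have "\<dots> \<le> Lc I * (\<epsilon> / (2 * (Lc I + 1)))"
      proof -
        have dle: "\<delta> \<le> \<epsilon> / (2 * (Lc I + 1))" unfolding \<delta>_def by simp
        show ?thesis using mult_left_mono[OF dle Lc0[of I]] by simp
      qed
      also have "\<dots> < \<epsilon> / 2" using Lc0[of I] e by (simp add: field_simps)
      finally have "Lc I * Xd xs Ms 0 * exp (- \<mu> * t) < \<epsilon> / 2" .
      thus "Xdist (xs t) (Ms t) xe Me < \<epsilon>" using glob[OF sol sm1 t, of I] I unfolding Xd_def by simp
    qed
  next
    show "\<exists>\<delta>>0. \<forall>xs Ms. S_solution N k r \<alpha> xs Ms \<and> Xdist (xs 0) (Ms 0) xe Me < \<delta> \<longrightarrow>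
        ((\<lambda>t. Xdist (xs t) (Ms t) xe Me) \<longlongrightarrow> 0) at_top"
    proof (intro exI[of _ \<delta>1] conjI d1(1) allI impI)
      fix xs Ms assume H: "S_solution N k r \<alpha> xs Ms \<and> Xdist (xs 0) (Ms 0) xe Me < \<delta>1"
      have sol: "S_solution N k r \<alpha> xs Ms" and sm: "Xd xs Ms 0 < \<delta>1" using H unfolding Xd_def by auto
      show "((\<lambda>t. Xdist (xs t) (Ms t) xe Me) \<longlongrightarrow> 0) at_top"
      proof (rule tendstoI)
        fix \<epsilon> :: real assume e: "\<epsilon> > 0"
        obtain I where I: "2 * tl I < \<epsilon> / 2" using tl0[of "\<epsilon>/2"] e by auto
        have e0: "((\<lambda>t. exp (- \<mu> * t)) \<longlongrightarrow> 0) at_top"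
        proof -
          have "LIM t at_top. \<mu> * t :> at_top"
            by (rule filterlim_tendsto_pos_mult_at_top[OF tendsto_const mu(1) filterlim_ident])
          hence "LIM t at_top. - \<mu> * t :> at_bot" by (simp add: filterlim_uminus_at_bot)
          thus ?thesis by (rule filterlim_compose[OF exp_at_bot])
        qed
        have lim: "((\<lambda>t. Lc I * Xd xs Ms 0 * exp (- \<mu> * t)) \<longlongrightarrow> 0) at_top"
          using tendsto_mult[OF tendsto_const e0, of "Lc I * Xd xs Ms 0"] by simp
        hence ev: "eventually (\<lambda>t. Lc I * Xd xs Ms 0 * exp (- \<mu> * t) < \<epsilon> / 2) at_top"
          using e by (intro order_tendstoD) auto
        moreover have "eventually (\<lambda>t. t \<ge> (0::real)) at_top" by (rule eventually_ge_at_top)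
        ultimately show "eventually (\<lambda>t. dist (Xdist (xs t) (Ms t) xe Me) 0 < \<epsilon>) at_top"
        proof eventually_elim
          case (elim t)
          have "Xd xs Ms t \<ge> 0" by (rule Xd0[OF sol elim(2)])
          thus ?case using glob[OF sol sm elim(2), of I] elim(1) I unfolding Xd_def by simp
        qed
      qed
    qed
  qed
qed

end
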